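(* Let $l\ge 2$ be an integer and $a\in\{1,\dots,l-1\}$, and let $X=X(\mathbb{Z}_{2l},\{\pm a,l\})$ be a connected $3$-regular circulant graph. Then perfect state transfer does not occur on $X$ between (distinct) vertex type states, i.e. there are no distinct vertices $x,y$ of $X$, no integer $\tau\ge 1$ and no $\gamma\in\mathbb{C}$ with $|\gamma|=1$ such that $U^{\tau}d^*e_x=\gamma\, d^*e_y$.
   Context: All graphs are finite and simple. For a graph $\Gamma=(V,E)$, the set of symmetric arcs is $\mathcal{A}=\{(x,y),(y,x)\mid \{x,y\}\in E\}$; for an arc $a=(x,y)$ write $o(a)=x$, $t(a)=y$, $a^{-1}=(y,x)$. The boundary matrix $d\in\mathbb{C}^{V\times\mathcal{A}}$ is $d_{x,a}=\frac{1}{\sqrt{\deg x}}\delta_{x,t(a)}$; the shift matrix $R\in\mathbb{C}^{\mathcal{A}\times\mathcal{A}}$ is $R_{a,b}=\delta_{a,b^{-1}}$; the time evolution matrix (Grover walk) is $U=R(2d^*d-I_{\mathcal{A}})$. For $x\in V$, $e_x\in\mathbb{C}^V$ is the standard unit vector, and $d^*e_x$ is called a vertex type state. Perfect state transfer from a state $\Phi$ to a state $\Psi$ (unit vectors in $\mathbb{C}^{\mathcal{A}}$, $\Phi\ne\Psi$) at time $\tau\in\mathbb{Z}_{\ge1}$ means $U^\tau\Phi=\gamma\Psi$ for some $\gamma\in\mathbb{C}$ with $|\gamma|=1$. For $S\subseteq\mathbb{Z}_n\setminus\{0\}$ with $S=-S$, the circulant graph $X(\mathbb{Z}_n,S)$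 has vertex set $\mathbb{Z}_n$ and edge set $\{\{x,y\}\mid y-x\in S\}$. *)

theory Defs
  imports Complex_Main
begin

text \<open>A finite simple graph is given by a vertex set V and an adjacency relation E
(assumed symmetric and irreflexive on V). Vectors in C^A are functions on pairs,
only their values on the arc set A matter.\<close>

definition arcs :: "'a set \<Rightarrow> ('a \<Rightarrow> 'a \<Rightarrow> bool) \<Rightarrow> ('a \<times> 'a) set" where
  "arcs V E = {(x, y). x \<in> V \<and> y \<in> V \<and> E x y}"

definition deg :: "'a set \<Rightarrow> ('a \<Rightarrow> 'a \<Rightarrow> bool) \<Rightarrow> 'a \<Rightarrow> nat" where
  "deg V E x = card {y \<in> V. E x y}"

definition bdry :: "'a set \<Rightarrow> ('a \<Rightarrow> 'a \<Rightarrow> bool) \<Rightarrow> 'a \<Rightarrow> 'a \<times> 'a \<Rightarrow> complex" where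
  "bdry V E x a = (if x = snd a then complex_of_real (1 / sqrt (real (deg V E x))) else 0)"

definition bdry_adj :: "'a set \<Rightarrow> ('a \<Rightarrow> 'a \<Rightarrow> bool) \<Rightarrow> 'a \<times> 'a \<Rightarrow> 'a \<Rightarrow> complex" where
  "bdry_adj V E a x = cnj (bdry V E x a)"

definition shift :: "'a \<times> 'a \<Rightarrow> 'a \<times> 'a \<Rightarrow> complex" where
  "shift a b = (if a = prod.swap b then 1 else 0)"

definition coin :: "'a set \<Rightarrow> ('a \<Rightarrow> 'a \<Rightarrow> bool) \<Rightarrow> 'a \<times> 'a \<Rightarrow> 'a \<times> 'a \<Rightarrow> complex" where
  "coin V E a b = 2 * (\<Sum>x\<in>V. bdry_adj V E a x * bdry V E x b) - (if a = b then 1 else 0)"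

definition grover :: "'a set \<Rightarrow> ('a \<Rightarrow> 'a \<Rightarrow> bool) \<Rightarrow> 'a \<times> 'a \<Rightarrow> 'a \<times> 'a \<Rightarrow> complex" where
  "grover V E a b = (\<Sum>c\<in>arcs V E. shift a c * coin V E c b)"

definition grover_apply :: "'a set \<Rightarrow> ('a \<Rightarrow> 'a \<Rightarrow> bool) \<Rightarrow> ('a \<times> 'a \<Rightarrow> complex) \<Rightarrow> ('a \<times> 'a \<Rightarrow> complex)" where
  "grover_apply V E v = (\<lambda>a. if a \<in> arcs V E then (\<Sum>b\<in>arcs V E. grover V E a b * v b) else 0)"

definition vertex_state :: "'a set \<Rightarrow> ('a \<Rightarrow> 'a \<Rightarrow> bool) \<Rightarrow> 'a \<Rightarrow> ('a \<times> 'a \<Rightarrow> complex)" where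
  "vertex_state V E x = (\<lambda>a. if a \<in> arcs V E then bdry_adj V E a x else 0)"

definition connected_graph :: "'a set \<Rightarrow> ('a \<Rightarrow> 'a \<Rightarrow> bool) \<Rightarrow> bool" where
  "connected_graph V E \<longleftrightarrow>
     (\<forall>x\<in>V. \<forall>y\<in>V. (\<lambda>u v. u \<in> V \<and> v \<in> V \<and> E u v)\<^sup>*\<^sup>* x y)"

definition regular_graph :: "'a set \<Rightarrow> ('a \<Rightarrow> 'a \<Rightarrow> bool) \<Rightarrow> nat \<Rightarrow> bool" where
  "regular_graph V E k \<longleftrightarrow> (\<forall>x\<in>V. deg V E x = k)"

text \<open>Circulant graph X(Z_n, S): vertices 0..n-1 (representatives of Z_n),
  x ~ y iff (y - x) mod n \<in> S mod n.\<close>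
definition circ_vertices :: "int \<Rightarrow> int set" where
  "circ_vertices n = {0..<n}"

definition circ_adj :: "int \<Rightarrow> int set \<Rightarrow> int \<Rightarrow> int \<Rightarrow> bool" where
  "circ_adj n S x y \<longleftrightarrow> (y - x) mod n \<in> (\<lambda>s. s mod n) ` S"

end

theory Submission
  imports Defs "HOL-Library.Real_Mod" "HOL-Number_Theory.Number_Theory"
begin

locale C3 =
  fixes l a :: int
  assumes l2: "l \<ge> 2" and a1: "1 \<le> a" and al: "a \<le> l - 1"
begin

abbreviation "nn \<equiv> 2 * l"
abbreviation "VV \<equiv> circ_vertices (2*l)"
abbreviation "EE \<equiv> circ_adj (2*l) {a, -a, l}"

lemma nn_pos: "nn > 0" using l2 by simp

lemma in_VV: "u \<in> VV \<longleftrightarrow> 0 \<le> u \<and> u < nn"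
  by (simp add: circ_vertices_def)

lemma mod_in_VV[simp]: "u mod nn \<in> VV"
  using nn_pos by (simp add: in_VV)

lemma eq_mod_iff: "p \<in> VV \<Longrightarrow> p = (u + s) mod nn \<longleftrightarrow> (p - u) mod nn = s mod nn"
proof -
  assume p: "p \<in> VV"
  hence pm: "p mod nn = p" using in_VV by simp
  have "p = (u + s) mod nn \<longleftrightarrow> p mod nn = (u + s) mod nn" using pm by simp
  also have "\<dots> \<longleftrightarrow> nn dvd (p - (u + s))" by (simp add: mod_eq_dvd_iff)
  also have "\<dots> \<longleftrightarrow> nn dvd ((p - u) - s)" by (simp add: algebra_simps)
  also have "\<dots> \<longleftrightarrow> (p - u) mod nn = s mod nn" by (simp add: mod_eq_dvd_iff)
  finally show ?thesis .
qed

lemma adj_iff: "p \<in> VV \<Longrightarrow> EE u p \<longleftrightarrow> p = (u + a) mod nn \<or> p = (u - a) mod nn \<or> p = (u + l) mod nn"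
  using eq_mod_iff[of p u a] eq_mod_iff[of p u "-a"] eq_mod_iff[of p u l]
  by (auto simp: circ_adj_def)

lemma ndvd: "0 < k \<Longrightarrow> k < nn \<Longrightarrow> \<not> nn dvd k"
  using zdvd_imp_le by fastforce

lemma ndvd': "0 < k \<Longrightarrow> k < nn \<Longrightarrow> \<not> nn dvd (-k)"
  using ndvd by simp

lemma dist1: "(u + a) mod nn \<noteq> (u - a) mod nn"
proof
  assume "(u + a) mod nn = (u - a) mod nn"
  hence "nn dvd (u + a) - (u - a)" by (simp add: mod_eq_dvd_iff)
  hence "nn dvd 2 * a" by (simp add: algebra_simps)
  thus False using ndvd[of "2*a"] a1 al by simp
qed

lemma dist2: "(u + a) mod nn \<noteq> (u + l) mod nn"
proof
  assume "(u + a) mod nn = (u + l) mod nn"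
  hence "(u + l) mod nn = (u + a) mod nn" by simp
  hence "nn dvd (u + l) - (u + a)" by (simp only: mod_eq_dvd_iff)
  also have "(u + l) - (u + a) = l - a" by simp
  finally show False using ndvd[of "l - a"] a1 al by simp
qed

lemma dist3: "(u - a) mod nn \<noteq> (u + l) mod nn"
proof
  assume "(u - a) mod nn = (u + l) mod nn"
  hence "(u + l) mod nn = (u - a) mod nn" by simp
  hence "nn dvd (u + l) - (u - a)" by (simp only: mod_eq_dvd_iff)
  also have "(u + l) - (u - a) = l + a" by simp
  finally show False using ndvd[of "l + a"] a1 al by simp
qed

lemma neg_cong: "x mod nn = s mod nn \<Longrightarrow> (- x) mod nn = (- s) mod nn"
proof -
  assume "x mod nn = s mod nn"
  hence "nn dvd x - s" by (simp only: mod_eq_dvd_iff)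
  hence "nn dvd (- x) - (- s)" using dvd_minus_iff[of nn "x - s"] by simp
  thus ?thesis by (simp only: mod_eq_dvd_iff)
qed

lemma adj_sym: "EE u p \<longleftrightarrow> EE p u"
proof -
  have key: "EE p u" if "EE u p" for u p
  proof -
    have "nn dvd (- l) - l" by simp
    hence lm: "(- l) mod nn = l mod nn" by (simp only: mod_eq_dvd_iff)
    have e: "u - p = - (p - u)" by simp
    from that have "(p - u) mod nn = a mod nn \<or> (p - u) mod nn = (-a) mod nn \<or> (p - u) mod nn = l mod nn"
      by (simp add: circ_adj_def)
    hence "(-(p - u)) mod nn = (-a) mod nn \<or> (-(p - u)) mod nn = (-(-a)) mod nn \<or> (-(p - u)) mod nn = (-l) mod nn"
      using neg_cong[of "p - u" a] neg_cong[of "p - u" "-a"] neg_cong[of "p - u" l] by blast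
    hence "(u - p) mod nn = (-a) mod nn \<or> (u - p) mod nn = a mod nn \<or> (u - p) mod nn = (-l) mod nn"
      by simp
    thus ?thesis using lm by (auto simp: circ_adj_def)
  qed
  show ?thesis using key by blast
qed

lemma nbrs: "u \<in> VV \<Longrightarrow> {p \<in> VV. EE u p} = {(u + a) mod nn, (u - a) mod nn, (u + l) mod nn}"
  using adj_iff by auto

lemma deg3: "u \<in> VV \<Longrightarrow> Defs.deg VV EE u = 3"
  unfolding Defs.deg_def using nbrs dist1 dist2 dist3 by simp

lemma nb_adj: "EE ((q + s) mod nn) q" if "s \<in> {a, -a, l}" for q s
proof -
  have "((q + s) mod nn - q) mod nn = s mod nn"
    by (simp add: mod_diff_left_eq)
  hence "EE q ((q + s) mod nn)"
    unfolding circ_adj_def using that imageI[of s "{a, -a, l}" "\<lambda>s. s mod nn"] by simp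
  thus ?thesis using adj_sym[of q "(q + s) mod nn"] by simp
qed

lemma arcs_iff: "(u, w) \<in> arcs VV EE \<longleftrightarrow> u \<in> VV \<and> w \<in> VV \<and> EE u w"
  by (simp add: arcs_def)

end


context C3 begin

lemma fin_VV: "finite VV" by (simp add: circ_vertices_def)

lemma fin_arcs: "finite (arcs VV EE)"
proof -
  have "arcs VV EE \<subseteq> VV \<times> VV" by (auto simp: arcs_def)
  thus ?thesis using fin_VV finite_subset by blast
qed

lemma arc_rev: "(u, w) \<in> arcs VV EE \<Longrightarrow> (w, u) \<in> arcs VV EE"
  using adj_sym by (auto simp: arcs_def)

lemma grover_eq:
  assumes uw: "(u, w) \<in> arcs VV EE"
  shows "grover VV EE (u, w) b = (if snd b = u then 2/3 else 0) - (if b = (w, u) then 1 else 0)"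
proof -
  have wu: "(w, u) \<in> arcs VV EE" using arc_rev uw by blast
  have uV: "u \<in> VV" using uw by (simp add: arcs_iff)
  have sh: "shift (u, w) c = (if c = (w, u) then 1 else 0)" for c
    by (cases c) (auto simp: shift_def)
  have g1: "grover VV EE (u, w) b = (\<Sum>c\<in>arcs VV EE. (if c = (w, u) then coin VV EE c b else 0))"
    unfolding grover_def sh by (intro sum.cong) auto
  have g2: "(\<Sum>c\<in>arcs VV EE. (if c = (w, u) then coin VV EE c b else 0)) = coin VV EE (w, u) b"
    using wu fin_arcs by (subst sum.delta) auto
  have S: "(\<Sum>x\<in>VV. bdry_adj VV EE (w, u) x * bdry VV EE x b) =
      (\<Sum>x\<in>VV. if x = u then (if snd b = u then 1/3 else 0) else 0)"
  proof (intro sum.cong refl)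
    fix x assume xV: "x \<in> VV"
    show "bdry_adj VV EE (w, u) x * bdry VV EE x b = (if x = u then (if snd b = u then 1/3 else 0) else 0)"
    proof (cases "x = u")
      case True
      have s3: "complex_of_real (1 / sqrt 3) * complex_of_real (1 / sqrt 3) = 1/3"
        by (simp flip: of_real_mult)
      have "bdry_adj VV EE (w, u) x * bdry VV EE x b = (if snd b = u then complex_of_real (1 / sqrt 3) * complex_of_real (1 / sqrt 3) else 0)"
        using True deg3[OF uV] by (simp add: bdry_adj_def bdry_def)
      thus ?thesis using True s3 by simp
    next
      case False
      thus ?thesis by (simp add: bdry_adj_def bdry_def)
    qed
  qed
  have S2: "(\<Sum>x\<in>VV. if x = u then (if snd b = u then 1/3 else 0) else 0) = (if snd b = u then 1/3 else (0::complex))"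
    using uV fin_VV by (simp only: sum.delta if_True)
  have "grover VV EE (u, w) b = coin VV EE (w, u) b" using g1 g2 by simp
  also have "\<dots> = 2 * (\<Sum>x\<in>VV. bdry_adj VV EE (w, u) x * bdry VV EE x b) - (if (w, u) = b then 1 else 0)"
    by (simp only: coin_def)
  also have "\<dots> = 2 * (if snd b = u then 1/3 else 0) - (if (w, u) = b then 1 else 0)"
    by (simp only: S S2)
  finally have "grover VV EE (u, w) b = 2 * (if snd b = u then 1/3 else 0) - (if (w, u) = b then 1 else 0)" .
  thus ?thesis by auto
qed

lemma nb_set: "u \<in> VV \<Longrightarrow> {b \<in> arcs VV EE. snd b = u} =
   (\<lambda>p. (p, u)) ` {(u + a) mod nn, (u - a) mod nn, (u + l) mod nn}"
proof -
  assume uV: "u \<in> VV"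
  have "{b \<in> arcs VV EE. snd b = u} = (\<lambda>p. (p, u)) ` {p \<in> VV. EE u p}"
    using uV adj_sym by (auto simp: arcs_def)
  thus ?thesis using nbrs uV by simp
qed

lemma gapply:
  assumes uw: "(u, w) \<in> arcs VV EE"
  shows "grover_apply VV EE \<psi> (u, w) = 2/3 * (\<psi> ((u + a) mod nn, u) + \<psi> ((u - a) mod nn, u) + \<psi> ((u + l) mod nn, u)) - \<psi> (w, u)"
proof -
  have wu: "(w, u) \<in> arcs VV EE" using arc_rev uw by blast
  have uV: "u \<in> VV" using uw by (simp add: arcs_iff)
  have "grover_apply VV EE \<psi> (u, w) = (\<Sum>b\<in>arcs VV EE. (if snd b = u then 2/3 * \<psi> b else 0) - (if b = (w, u) then \<psi> b else 0))"
  proof -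
    have "grover_apply VV EE \<psi> (u, w) = (\<Sum>b\<in>arcs VV EE. grover VV EE (u, w) b * \<psi> b)"
      unfolding grover_apply_def using uw by simp
    also have "\<dots> = (\<Sum>b\<in>arcs VV EE. (if snd b = u then 2/3 * \<psi> b else 0) - (if b = (w, u) then \<psi> b else 0))"
      by (intro sum.cong refl) (simp add: grover_eq[OF uw] left_diff_distrib)
    finally show ?thesis .
  qed
  also have "\<dots> = (\<Sum>b\<in>arcs VV EE. (if snd b = u then 2/3 * \<psi> b else 0)) - \<psi> (w, u)"
    using wu fin_arcs by (simp add: sum_subtractf)
  also have "(\<Sum>b\<in>arcs VV EE. (if snd b = u then 2/3 * \<psi> b else 0)) = (\<Sum>b\<in>{b \<in> arcs VV EE. snd b = u}. 2/3 * \<psi> b)"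
    using fin_arcs by (rule sum.inter_filter[symmetric])
  also have "\<dots> = (\<Sum>p\<in>{(u + a) mod nn, (u - a) mod nn, (u + l) mod nn}. 2/3 * \<psi> (p, u))"
    unfolding nb_set[OF uV] by (subst sum.reindex) (auto simp: inj_on_def)
  also have "\<dots> = 2/3 * (\<psi> ((u + a) mod nn, u) + \<psi> ((u - a) mod nn, u) + \<psi> ((u + l) mod nn, u))"
    using dist1[of u] dist2[of u] dist3[of u] by (simp add: distrib_left)
  finally show ?thesis .
qed

end


context C3 begin

primrec st :: "int \<Rightarrow> nat \<Rightarrow> (int \<Rightarrow> complex) \<times> (int \<Rightarrow> complex)" where
  "st x 0 = (\<lambda>_. 0, \<lambda>q. if q = x then 1 else 0)"
| "st x (Suc t) = (\<lambda>u. 2/3 * (fst (st x t) ((u + a) mod nn) + fst (st x t) ((u - a) mod nn)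
        + fst (st x t) ((u + l) mod nn)) + snd (st x t) u, \<lambda>w. - fst (st x t) w)"

abbreviation "FF x t \<equiv> fst (st x t)"
abbreviation "GG x t \<equiv> snd (st x t)"

lemma GG_Suc: "GG x (Suc t) w = - FF x t w" by simp

lemma FF_Suc: "FF x (Suc t) u = 2/3 * (FF x t ((u + a) mod nn) + FF x t ((u - a) mod nn)
        + FF x t ((u + l) mod nn)) + GG x t u" by simp

lemma vs_eq: "y \<in> VV \<Longrightarrow> vertex_state VV EE y e =
   (if e \<in> arcs VV EE then (if snd e = y then 1 else 0) / complex_of_real (sqrt 3) else 0)"
  using deg3[of y] by (auto simp: vertex_state_def bdry_adj_def bdry_def of_real_divide)

lemma walk:
  assumes xV: "x \<in> VV"
  shows "(grover_apply VV EE ^^ t) (vertex_state VV EE x) =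
    (\<lambda>e. if e \<in> arcs VV EE then (FF x t (fst e) + GG x t (snd e)) / complex_of_real (sqrt 3) else 0)"
proof (induction t)
  case 0
  show ?case using vs_eq[OF xV] by (auto intro!: ext)
next
  case (Suc t)
  let ?r = "complex_of_real (sqrt 3)"
  have r0: "?r \<noteq> 0" by simp
  show ?case
  proof (rule ext)
    fix e :: "int \<times> int"
    obtain u w where e: "e = (u, w)" by (cases e)
    show "(grover_apply VV EE ^^ Suc t) (vertex_state VV EE x) e =
      (if e \<in> arcs VV EE then (FF x (Suc t) (fst e) + GG x (Suc t) (snd e)) / ?r else 0)"
    proof (cases "e \<in> arcs VV EE")
      case False
      thus ?thesis by (simp add: grover_apply_def)
    next
      case True
      hence uw: "(u, w) \<in> arcs VV EE" using e by simp
      have uV: "u \<in> VV" using uw by (simp add: arcs_iff)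
      have wu: "(w, u) \<in> arcs VV EE" using arc_rev uw by blast
      have ar: "((u + s) mod nn, u) \<in> arcs VV EE" if "s \<in> {a, -a, l}" for s
        using nb_adj[OF that, of u] uV by (simp add: arcs_iff)
      have "(grover_apply VV EE ^^ Suc t) (vertex_state VV EE x) e =
        grover_apply VV EE ((grover_apply VV EE ^^ t) (vertex_state VV EE x)) (u, w)"
        using e by simp
      also have "\<dots> = 2/3 * ((FF x t ((u + a) mod nn) + GG x t u) / ?r + (FF x t ((u + - a) mod nn) + GG x t u) / ?r
          + (FF x t ((u + l) mod nn) + GG x t u) / ?r) - (FF x t w + GG x t u) / ?r"
        unfolding gapply[OF uw] Suc using ar[of a] ar[of "-a"] ar[of l] wu by simp
      also have "\<dots> = (FF x (Suc t) u + GG x (Suc t) w) / ?r"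
        using r0 by (simp add: field_simps)
      finally show ?thesis using True e by simp
    qed
  qed
qed

lemma pst_eq:
  assumes xV: "x \<in> VV" and yV: "y \<in> VV"
    and H: "\<forall>e\<in>arcs VV EE. (grover_apply VV EE ^^ \<tau>) (vertex_state VV EE x) e = \<gamma> * vertex_state VV EE y e"
    and qV: "q \<in> VV" and s: "s \<in> {a, -a, l}"
  shows "FF x \<tau> ((q + s) mod nn) + GG x \<tau> q = \<gamma> * (if q = y then 1 else 0)"
proof -
  let ?r = "complex_of_real (sqrt 3)"
  have ar: "((q + s) mod nn, q) \<in> arcs VV EE"
    using nb_adj[OF s, of q] qV by (simp add: arcs_iff)
  have "(FF x \<tau> ((q + s) mod nn) + GG x \<tau> q) / ?r = \<gamma> * ((if q = y then 1 else 0) / ?r)"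
    using H ar unfolding walk[OF xV] vs_eq[OF yV] by auto
  thus ?thesis by (simp add: field_simps)
qed

end


lemma powi_mod:
  fixes \<omega> :: complex
  assumes "\<omega> powi m = 1"
  shows "\<omega> powi (k mod m) = \<omega> powi k"
proof (cases "\<omega> = 0")
  case True
  hence "m = 0" using assms by (auto simp: power_int_0_left_if split: if_splits)
  thus ?thesis by simp
next
  case False
  have "\<omega> powi k = \<omega> powi (m * (k div m) + k mod m)" by simp
  also have "\<dots> = \<omega> powi (m * (k div m)) * \<omega> powi (k mod m)"
    using False by (rule power_int_add[OF disjI1])
  also have "\<omega> powi (m * (k div m)) = 1" by (simp add: power_int_mult assms)
  finally show ?thesis by simp
qed

fun sq :: "complex \<Rightarrow> complex \<Rightarrow> nat \<Rightarrow> complex" where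
  "sq c z 0 = 0"
| "sq c z (Suc 0) = z"
| "sq c z (Suc (Suc t)) = c * sq c z (Suc t) - sq c z t"

context C3 begin

definition Phi :: "complex \<Rightarrow> (int \<Rightarrow> complex) \<Rightarrow> complex" where
  "Phi \<omega> f = (\<Sum>v\<in>VV. f v * \<omega> powi v)"

lemma Phi_shift:
  assumes w: "\<omega> powi nn = 1"
  shows "(\<Sum>v\<in>VV. f ((v + s) mod nn) * \<omega> powi v) = \<omega> powi (-s) * Phi \<omega> f"
proof -
  have w0: "\<omega> \<noteq> 0" using w nn_pos by (auto simp: power_int_0_left_if)
  have "(\<Sum>v\<in>VV. f ((v + s) mod nn) * \<omega> powi v) = (\<Sum>w\<in>VV. f w * \<omega> powi (w - s))"
  proof (rule sum.reindex_bij_witness[where i = "\<lambda>w. (w - s) mod nn" and j = "\<lambda>v. (v + s) mod nn"])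
    fix v assume v: "v \<in> VV"
    hence vm: "v mod nn = v" by (simp add: in_VV)
    show "((v + s) mod nn - s) mod nn = v" using vm by (simp add: mod_diff_left_eq)
    show "(v + s) mod nn \<in> VV" by simp
    have "\<omega> powi ((v + s) mod nn - s) = \<omega> powi (((v + s) mod nn - s) mod nn)"
      using powi_mod[OF w] by simp
    also have "((v + s) mod nn - s) mod nn = v" using vm by (simp add: mod_diff_left_eq)
    finally show "f ((v + s) mod nn) * \<omega> powi ((v + s) mod nn - s) = f ((v + s) mod nn) * \<omega> powi v" by simp
  next
    fix w assume w: "w \<in> VV"
    hence wm: "w mod nn = w" by (simp add: in_VV)
    show "((w - s) mod nn + s) mod nn = w" using wm by (simp add: mod_add_left_eq)
    show "(w - s) mod nn \<in> VV" by simp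
  qed
  also have "\<dots> = (\<Sum>w\<in>VV. \<omega> powi (-s) * (f w * \<omega> powi w))"
  proof (intro sum.cong refl)
    fix v
    have i: "\<omega> powi (v - s) = \<omega> powi v * \<omega> powi (-s)"
      using power_int_add[OF disjI1[OF w0], of v "-s"] by simp
    show "f v * \<omega> powi (v - s) = \<omega> powi (-s) * (f v * \<omega> powi v)"
      using i by (simp add: algebra_simps)
  qed
  also have "\<dots> = \<omega> powi (-s) * Phi \<omega> f" by (simp add: Phi_def sum_distrib_left)
  finally show ?thesis .
qed

lemma Phi_shift_minus:
  assumes w: "\<omega> powi nn = 1"
  shows "(\<Sum>v\<in>VV. f ((v - s) mod nn) * \<omega> powi v) = \<omega> powi s * Phi \<omega> f"
  using Phi_shift[OF w, of f "-s"] by simp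

lemma Phi_delta: "y \<in> VV \<Longrightarrow> Phi \<omega> (\<lambda>q. if q = y then c else 0) = c * \<omega> powi y"
proof -
  assume yV: "y \<in> VV"
  have "Phi \<omega> (\<lambda>q. if q = y then c else 0) = (\<Sum>v\<in>VV. if v = y then c * \<omega> powi v else 0)"
    unfolding Phi_def by (intro sum.cong refl) auto
  also have "\<dots> = c * \<omega> powi y" using fin_VV yV by simp
  finally show ?thesis .
qed

lemma Phi_FF2:
  assumes w: "\<omega> powi nn = 1"
  shows "Phi \<omega> (FF x (Suc (Suc t))) = (2/3 * (\<omega> powi (-a) + \<omega> powi a + \<omega> powi (-l))) * Phi \<omega> (FF x (Suc t)) - Phi \<omega> (FF x t)"
proof -
  let ?f = "FF x (Suc t)"
  have "Phi \<omega> (FF x (Suc (Suc t))) = (\<Sum>v\<in>VV. (2/3 * (?f ((v + a) mod nn) + ?f ((v - a) mod nn) + ?f ((v + l) mod nn)) - FF x t v) * \<omega> powi v)"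
    by (simp add: Phi_def)
  also have "\<dots> = 2/3 * ((\<Sum>v\<in>VV. ?f ((v + a) mod nn) * \<omega> powi v) + (\<Sum>v\<in>VV. ?f ((v - a) mod nn) * \<omega> powi v)
      + (\<Sum>v\<in>VV. ?f ((v + l) mod nn) * \<omega> powi v)) - (\<Sum>v\<in>VV. FF x t v * \<omega> powi v)"
    by (simp add: algebra_simps sum.distrib sum_subtractf sum_distrib_left)
  also have "\<dots> = 2/3 * (\<omega> powi (-a) * Phi \<omega> ?f + \<omega> powi a * Phi \<omega> ?f + \<omega> powi (-l) * Phi \<omega> ?f) - Phi \<omega> (FF x t)"
    unfolding Phi_shift[OF w] Phi_shift_minus[OF w] by (simp add: Phi_def)
  finally show ?thesis by (simp add: algebra_simps)
qed

lemma Phi_FF0: "Phi \<omega> (FF x 0) = 0" by (simp add: Phi_def)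

lemma Phi_FF1: "x \<in> VV \<Longrightarrow> Phi \<omega> (FF x (Suc 0)) = \<omega> powi x"
  using Phi_delta[of x \<omega> 1] by simp

lemma Phi_sq:
  assumes w: "\<omega> powi nn = 1" and xV: "x \<in> VV"
  shows "Phi \<omega> (FF x t) = sq (2/3 * (\<omega> powi (-a) + \<omega> powi a + \<omega> powi (-l))) (\<omega> powi x) t"
proof -
  let ?c = "2/3 * (\<omega> powi (-a) + \<omega> powi a + \<omega> powi (-l))"
  have "Phi \<omega> (FF x t) = sq ?c (\<omega> powi x) t \<and> Phi \<omega> (FF x (Suc t)) = sq ?c (\<omega> powi x) (Suc t)"
  proof (induction t)
    case 0
    then show ?case using Phi_FF0 Phi_FF1[OF xV] by simp
  next
    case (Suc t)
    then show ?case using Phi_FF2[OF w, of x t] by simp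
  qed
  thus ?thesis by simp
qed

lemma char_eq:
  assumes w: "\<omega> powi nn = 1" and xV: "x \<in> VV" and yV: "y \<in> VV"
    and H: "\<forall>e\<in>arcs VV EE. (grover_apply VV EE ^^ Suc \<tau>) (vertex_state VV EE x) e = \<gamma> * vertex_state VV EE y e"
    and s: "s \<in> {a, -a, l}"
  shows "\<omega> powi (-s) * Phi \<omega> (FF x (Suc \<tau>)) - Phi \<omega> (FF x \<tau>) = \<gamma> * \<omega> powi y"
proof -
  have eq: "FF x (Suc \<tau>) ((q + s) mod nn) + GG x (Suc \<tau>) q = \<gamma> * (if q = y then 1 else 0)" if "q \<in> VV" for q
    using pst_eq[OF xV yV H that s] .
  have "(\<Sum>q\<in>VV. (FF x (Suc \<tau>) ((q + s) mod nn) + GG x (Suc \<tau>) q) * \<omega> powi q)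
      = (\<Sum>q\<in>VV. (\<gamma> * (if q = y then 1 else 0)) * \<omega> powi q)"
    using eq by (intro sum.cong refl) simp
  also have "\<dots> = (\<Sum>q\<in>VV. if q = y then \<gamma> * \<omega> powi q else 0)"
    by (intro sum.cong refl) auto
  also have "\<dots> = \<gamma> * \<omega> powi y" using fin_VV yV by simp
  also have "(\<Sum>q\<in>VV. (FF x (Suc \<tau>) ((q + s) mod nn) + GG x (Suc \<tau>) q) * \<omega> powi q)
      = (\<Sum>q\<in>VV. FF x (Suc \<tau>) ((q + s) mod nn) * \<omega> powi q) + (\<Sum>q\<in>VV. GG x (Suc \<tau>) q * \<omega> powi q)"
    by (simp only: distrib_right sum.distrib)
  also have "(\<Sum>q\<in>VV. FF x (Suc \<tau>) ((q + s) mod nn) * \<omega> powi q) = \<omega> powi (-s) * Phi \<omega> (FF x (Suc \<tau>))"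
    by (rule Phi_shift[OF w])
  also have "(\<Sum>q\<in>VV. GG x (Suc \<tau>) q * \<omega> powi q) = - Phi \<omega> (FF x \<tau>)"
    by (simp add: Phi_def sum_negf)
  finally show ?thesis by simp
qed

end


lemma sq_2: "sq 2 z t = of_nat t * z"
proof -
  have "sq 2 z t = of_nat t * z \<and> sq 2 z (Suc t) = of_nat (Suc t) * z"
    by (induction t) (auto simp: algebra_simps)
  thus ?thesis by simp
qed

lemma sq_m2: "sq (-2) z t = z * (-1)^(t+1) * of_nat t"
proof -
  have "sq (-2) z t = z * (-1)^(t+1) * of_nat t \<and> sq (-2) z (Suc t) = z * (-1)^(t+2) * of_nat (Suc t)"
    by (induction t) (auto simp: algebra_simps)
  thus ?thesis by simp
qed

lemma sq_0: "sq 0 z (2*k) = 0 \<and> sq 0 z (2*k+1) = (-1)^k * z"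
  by (induction k) (auto simp: numeral_2_eq_2)

lemma sq_0_even: "z \<noteq> 0 \<Longrightarrow> sq 0 z t = 0 \<Longrightarrow> even t"
proof (rule ccontr)
  assume z: "z \<noteq> 0" and s: "sq 0 z t = 0" and o: "odd t"
  then obtain k where "t = 2*k+1" by (metis oddE)
  thus False using sq_0[of z k] s z by simp
qed

lemma sq_inv: "(sq c z (Suc t))^2 - c * sq c z (Suc t) * sq c z t + (sq c z t)^2 = z^2"
proof (induction t)
  case 0
  then show ?case by simp
next
  case (Suc t)
  then show ?case by (simp add: algebra_simps power2_eq_square)
qed

fun kk :: "int \<Rightarrow> nat \<Rightarrow> int" where
  "kk m 0 = 0"
| "kk m (Suc 0) = 1"
| "kk m (Suc (Suc t)) = 2 * m * kk m (Suc t) - 9 * kk m t"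

lemma sq_third: "3^t * sq (2 * of_int m / 3) z t = 3 * z * of_int (kk m t)"
proof -
  have "3^t * sq (2 * of_int m / 3) z t = 3 * z * of_int (kk m t) \<and>
        3^(Suc t) * sq (2 * of_int m / 3) z (Suc t) = 3 * z * of_int (kk m (Suc t))"
  proof (induction t)
    case 0
    then show ?case by simp
  next
    case (Suc t)
    then show ?case by (simp add: algebra_simps)
  qed
  thus ?thesis by simp
qed

lemma kk_mod: assumes "m = 1 \<or> m = -1" shows "kk m (Suc t) mod 3 \<noteq> 0"
proof -
  have "kk m (Suc t) mod 3 \<noteq> 0 \<and> kk m (Suc (Suc t)) mod 3 \<noteq> 0"
  proof (induction t)
    case 0
    then show ?case using assms by auto
  next
    case (Suc t)
    have "kk m (Suc (Suc (Suc t))) mod 3 = (2 * m * kk m (Suc (Suc t))) mod 3"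
      by (simp add: mod_eq_dvd_iff)
    moreover have "(2 * m * kk m (Suc (Suc t))) mod 3 \<noteq> 0"
    proof
      assume "(2 * m * kk m (Suc (Suc t))) mod 3 = 0"
      hence "3 dvd 2 * m * kk m (Suc (Suc t))" by presburger
      hence "3 dvd 2 * kk m (Suc (Suc t)) \<or> 3 dvd - 2 * kk m (Suc (Suc t))" using assms by auto
      hence "3 dvd kk m (Suc (Suc t))" by presburger
      thus False using Suc by presburger
    qed
    ultimately show ?case using Suc by simp
  qed
  thus ?thesis by simp
qed

lemma sq_third_ne: assumes "m = 1 \<or> m = -1" "z \<noteq> 0" shows "sq (2 * of_int m / 3) z (Suc t) \<noteq> 0"
proof
  assume "sq (2 * of_int m / 3) z (Suc t) = 0"
  hence "3 * z * of_int (kk m (Suc t)) = 0" using sq_third[of "Suc t" m z] by simp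
  hence "kk m (Suc t) = 0" using assms by simp
  thus False using kk_mod[OF assms(1), of t] by simp
qed



context C3 begin

definition op3 :: "int \<Rightarrow> int \<Rightarrow> int \<Rightarrow> (int \<Rightarrow> int) \<Rightarrow> int \<Rightarrow> int" where
  "op3 s1 s2 s3 g u = g ((u + s1) mod nn) + g ((u + s2) mod nn) + g ((u + s3) mod nn)"

fun RR :: "int \<Rightarrow> nat \<Rightarrow> int \<Rightarrow> int" where
  "RR x 0 = (\<lambda>_. 0)"
| "RR x (Suc 0) = (\<lambda>u. if u = x then 1 else 0)"
| "RR x (Suc (Suc t)) = (\<lambda>u. 2 * op3 a (-a) l (RR x (Suc t)) u - 9 * RR x t u)"

lemma FF_RR: "3^t * FF x t u = 3 * of_int (RR x t u)"
proof -
  have "(\<forall>u. 3^t * FF x t u = 3 * of_int (RR x t u)) \<and> (\<forall>u. 3^(Suc t) * FF x (Suc t) u = 3 * of_int (RR x (Suc t) u))"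
  proof (induction t)
    case 0
    then show ?case by simp
  next
    case (Suc t)
    have A: "3^(Suc t) * FF x (Suc t) v = 3 * of_int (RR x (Suc t) v)" for v using Suc by blast
    have B: "3^t * FF x t v = 3 * of_int (RR x t v)" for v using Suc by blast
    have "3^(Suc (Suc t)) * FF x (Suc (Suc t)) u = 3 * of_int (RR x (Suc (Suc t)) u)" for u
    proof -
      have "3^(Suc (Suc t)) * FF x (Suc (Suc t)) u =
         2 * (3^(Suc t) * FF x (Suc t) ((u + a) mod nn) + 3^(Suc t) * FF x (Suc t) ((u - a) mod nn)
           + 3^(Suc t) * FF x (Suc t) ((u + l) mod nn)) - 9 * (3^t * FF x t u)"
        by (simp add: algebra_simps)
      also have "\<dots> = 3 * of_int (RR x (Suc (Suc t)) u)"
        unfolding A B by (simp add: op3_def algebra_simps)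
      finally show ?thesis .
    qed
    thus ?case using A by blast
  qed
  thus ?thesis by blast
qed

definition ceq :: "(int \<Rightarrow> int) \<Rightarrow> (int \<Rightarrow> int) \<Rightarrow> bool" where
  "ceq g h \<longleftrightarrow> (\<forall>v\<in>VV. g v mod 3 = h v mod 3)"

lemma ceq_trans: "ceq f g \<Longrightarrow> ceq g h \<Longrightarrow> ceq f h" by (simp add: ceq_def)

lemma op3_cong: "ceq g h \<Longrightarrow> op3 s1 s2 s3 g u mod 3 = op3 s1 s2 s3 h u mod 3"
  unfolding ceq_def op3_def
  by (metis mod_add_cong mod_in_VV)

lemma op3_ceq: "ceq g h \<Longrightarrow> ceq (op3 s1 s2 s3 g) (op3 s1 s2 s3 h)"
  using op3_cong by (simp add: ceq_def)

lemma funpow_ceq: "ceq g h \<Longrightarrow> ceq ((op3 s1 s2 s3 ^^ k) g) ((op3 s1 s2 s3 ^^ k) h)"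
  by (induction k) (auto intro: op3_ceq)

lemma op3_zero: "(op3 s1 s2 s3 ^^ k) (\<lambda>_. 0) = (\<lambda>_. 0)"
  by (induction k) (auto simp: op3_def)

lemma op3_smult: "op3 s1 s2 s3 (\<lambda>v. c * g v) u = c * op3 s1 s2 s3 g u"
  by (simp add: op3_def algebra_simps)

lemma cube: "op3 s1 s2 s3 (op3 s1 s2 s3 (op3 s1 s2 s3 g)) u mod 3 = op3 (3*s1) (3*s2) (3*s3) g u mod 3"
proof -
  define h where "h z = g ((u + z) mod nn)" for z
  have m: "((((u + p) mod nn) + q) mod nn + r) mod nn = (u + (p + q + r)) mod nn" for p q r
    by (simp add: mod_add_left_eq add.assoc)
  have L: "op3 s1 s2 s3 (op3 s1 s2 s3 (op3 s1 s2 s3 g)) u =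
     h (s1+s1+s1) + h (s1+s1+s2) + h (s1+s1+s3) + h (s1+s2+s1) + h (s1+s2+s2) + h (s1+s2+s3) + h (s1+s3+s1) + h (s1+s3+s2) + h (s1+s3+s3) +
     h (s2+s1+s1) + h (s2+s1+s2) + h (s2+s1+s3) + h (s2+s2+s1) + h (s2+s2+s2) + h (s2+s2+s3) + h (s2+s3+s1) + h (s2+s3+s2) + h (s2+s3+s3) +
     h (s3+s1+s1) + h (s3+s1+s2) + h (s3+s1+s3) + h (s3+s2+s1) + h (s3+s2+s2) + h (s3+s2+s3) + h (s3+s3+s1) + h (s3+s3+s2) + h (s3+s3+s3)"
    unfolding op3_def h_def m by (simp add: add.assoc)
  have R: "op3 (3*s1) (3*s2) (3*s3) g u = h (s1+s1+s1) + h (s2+s2+s2) + h (s3+s3+s3)"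
  proof -
    have "3 * s = s + s + s" for s :: int by simp
    thus ?thesis unfolding op3_def h_def by simp
  qed
  have hc:
    "h (s1+s2+s1) = h (s1+s1+s2)"
    "h (s2+s1+s1) = h (s1+s1+s2)"
    "h (s1+s3+s1) = h (s1+s1+s3)"
    "h (s3+s1+s1) = h (s1+s1+s3)"
    "h (s2+s1+s2) = h (s2+s2+s1)"
    "h (s1+s2+s2) = h (s2+s2+s1)"
    "h (s2+s3+s2) = h (s2+s2+s3)"
    "h (s3+s2+s2) = h (s2+s2+s3)"
    "h (s3+s1+s3) = h (s3+s3+s1)"
    "h (s1+s3+s3) = h (s3+s3+s1)"
    "h (s3+s2+s3) = h (s3+s3+s2)"
    "h (s2+s3+s3) = h (s3+s3+s2)"
    "h (s1+s3+s2) = h (s1+s2+s3)"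
    "h (s2+s1+s3) = h (s1+s2+s3)"
    "h (s2+s3+s1) = h (s1+s2+s3)"
    "h (s3+s1+s2) = h (s1+s2+s3)"
    "h (s3+s2+s1) = h (s1+s2+s3)"
    by (simp_all add: ac_simps)
  have "op3 s1 s2 s3 (op3 s1 s2 s3 (op3 s1 s2 s3 g)) u - op3 (3*s1) (3*s2) (3*s3) g u =
     3 * (h (s1+s1+s2) + h (s1+s1+s3) + h (s2+s2+s1) + h (s2+s2+s3) + h (s3+s3+s1) + h (s3+s3+s2) + 2 * h (s1+s2+s3))"
    unfolding L R hc by (simp add: algebra_simps)
  thus ?thesis by (simp add: mod_eq_dvd_iff)
qed

lemma pow3: "ceq ((op3 s1 s2 s3 ^^ (3^j)) g) (op3 (3^j*s1) (3^j*s2) (3^j*s3) g)"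
proof (induction j arbitrary: g)
  case 0
  then show ?case by (simp add: ceq_def)
next
  case (Suc j)
  let ?M = "op3 s1 s2 s3 ^^ (3^j)"
  let ?P = "op3 (3^j*s1) (3^j*s2) (3^j*s3)"
  have M3: "(op3 s1 s2 s3 ^^ (3^Suc j)) g = ?M (?M (?M g))"
  proof -
    have "(3::nat)^Suc j = 3^j + (3^j + 3^j)" by simp
    thus ?thesis by (simp only: funpow_add o_apply)
  qed
  have "ceq (?M (?M (?M g))) (?P (?M (?M g)))" using Suc by blast
  moreover have "ceq (?P (?M (?M g))) (?P (?P (?M g)))" using Suc op3_ceq by blast
  moreover have "ceq (?P (?P (?M g))) (?P (?P (?P g)))" using Suc op3_ceq by blast
  moreover have "ceq (?P (?P (?P g))) (op3 (3^Suc j*s1) (3^Suc j*s2) (3^Suc j*s3) g)"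
    using cube[of "3^j*s1" "3^j*s2" "3^j*s3" g] by (simp add: ceq_def mult.assoc)
  ultimately show ?case unfolding M3 by (meson ceq_trans)
qed

end


context C3 begin

abbreviation "opA \<equiv> op3 a (-a) l"

lemma RR_N: "ceq (RR x (Suc t)) (\<lambda>u. 2^t * (opA ^^ t) (\<lambda>v. if v = x then 1 else 0) u)"
proof (induction t)
  case 0
  then show ?case by (simp add: ceq_def)
next
  case (Suc t)
  let ?N = "(opA ^^ t) (\<lambda>v. if v = x then 1 else 0)"
  show ?case unfolding ceq_def
  proof
    fix u assume uV: "u \<in> VV"
    have "RR x (Suc (Suc t)) u mod 3 = (2 * opA (RR x (Suc t)) u) mod 3"
      by (simp add: mod_eq_dvd_iff)
    also have "\<dots> = (2 * opA (\<lambda>v. 2^t * ?N v) u) mod 3"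
      using op3_cong[OF Suc] by (metis mod_mult_cong)
    also have "\<dots> = (2^Suc t * (opA ^^ Suc t) (\<lambda>v. if v = x then 1 else 0) u) mod 3"
      by (simp add: op3_smult mult.assoc)
    finally show "RR x (Suc (Suc t)) u mod 3 = (2^Suc t * (opA ^^ Suc t) (\<lambda>v. if v = x then 1 else 0) u) mod 3" .
  qed
qed

lemma exists_j:
  fixes t :: nat
  assumes "\<not> 3 dvd l"
  shows "\<exists>j. t \<le> 3^j \<and> nn dvd 3^j - 1"
proof -
  have "\<not> (3::int) dvd nn" using assms by presburger
  have "\<not> (3::nat) dvd nat nn"
  proof
    assume "(3::nat) dvd nat nn"
    hence "int 3 dvd int (nat nn)" by (simp only: int_dvd_int_iff)
    thus False using \<open>\<not> (3::int) dvd nn\<close> nn_pos by simp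
  qed
  hence cp: "coprime (3::nat) (nat nn)" by (intro prime_imp_coprime) simp_all
  define T where "T = totient (nat nn)"
  have T1: "T \<ge> 1" using nn_pos by (simp add: T_def Suc_le_eq)
  have "[3 ^ T = 1] (mod nat nn)" using euler_theorem[OF cp] by (simp add: T_def)
  hence "[(3 ^ T) ^ t = 1 ^ t] (mod nat nn)" by (rule cong_pow)
  hence "[3 ^ (T * t) = 1] (mod nat nn)" by (simp add: power_mult)
  hence "[int (3 ^ (T * t)) = int 1] (mod int (nat nn))" by (simp only: cong_int_iff)
  hence "[3 ^ (T * t) = 1] (mod nn)" using nn_pos by simp
  hence d: "nn dvd 3 ^ (T * t) - 1" by (simp add: cong_iff_dvd_diff)
  have "t \<le> T * t" using T1 by simp
  also have "T * t < 2 ^ (T * t)" by (rule less_exp)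
  also have "(2::nat) ^ (T * t) \<le> 3 ^ (T * t)" by (rule power_mono) auto
  finally have "t \<le> 3 ^ (T * t)" by simp
  thus ?thesis using d by blast
qed

lemma case_i:
  assumes xV: "x \<in> VV" and yV: "y \<in> VV" and n3: "\<not> 3 dvd l"
    and H: "\<forall>e\<in>arcs VV EE. (grover_apply VV EE ^^ Suc \<tau>) (vertex_state VV EE x) e = \<gamma> * vertex_state VV EE y e"
  shows False
proof -
  let ?e = "\<lambda>v::int. if v = x then 1 else (0::int)"
  have R0: "RR x (Suc \<tau>) p mod 3 = 0" if pV: "p \<in> VV" for p
  proof -
    let ?q1 = "(p - a) mod nn" and ?q2 = "(p + a) mod nn"
    have pm: "p mod nn = p" using pV by (simp add: in_VV)
    have e1: "(?q1 + a) mod nn = p" using pm by (simp add: mod_add_left_eq)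
    have e2: "(?q2 + - a) mod nn = p" using pm by (simp add: mod_diff_left_eq)
    have E1: "FF x (Suc \<tau>) p + GG x (Suc \<tau>) ?q1 = \<gamma> * (if ?q1 = y then 1 else 0)"
      using pst_eq[OF xV yV H mod_in_VV[of "p - a"], of a] by (simp only: e1 insert_iff simp_thms)
    have E2: "FF x (Suc \<tau>) p + GG x (Suc \<tau>) ?q2 = \<gamma> * (if ?q2 = y then 1 else 0)"
      using pst_eq[OF xV yV H mod_in_VV[of "p + a"], of "-a"] by (simp only: e2 insert_iff simp_thms)
    have ne: "?q1 \<noteq> ?q2" using dist1[of p] by simp
    have "\<exists>q. FF x (Suc \<tau>) p + GG x (Suc \<tau>) q = 0"
    proof (cases "?q1 = y")
      case True
      hence n2: "?q2 \<noteq> y" using ne by simp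
      have "FF x (Suc \<tau>) p + GG x (Suc \<tau>) ?q2 = 0" using E2 by (simp only: if_not_P[OF n2] mult_zero_right)
      thus ?thesis by blast
    next
      case False
      have "FF x (Suc \<tau>) p + GG x (Suc \<tau>) ?q1 = 0" using E1 by (simp only: if_not_P[OF False] mult_zero_right)
      thus ?thesis by blast
    qed
    then obtain q where qq: "FF x (Suc \<tau>) p + GG x (Suc \<tau>) q = 0" by blast
    hence "FF x (Suc \<tau>) p = FF x \<tau> q" by simp
    hence "3^(Suc \<tau>) * FF x (Suc \<tau>) p = 3 * (3^\<tau> * FF x \<tau> q)" by simp
    hence "3 * of_int (RR x (Suc \<tau>) p) = 3 * (3 * (of_int (RR x \<tau> q) :: complex))"
      by (simp only: FF_RR)
    hence "(of_int (RR x (Suc \<tau>) p) :: complex) = of_int (3 * RR x \<tau> q)" by simp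
    hence "RR x (Suc \<tau>) p = 3 * RR x \<tau> q" by (simp only: of_int_eq_iff)
    thus ?thesis by simp
  qed
  have N0: "ceq ((opA ^^ \<tau>) ?e) (\<lambda>_. 0)" unfolding ceq_def
  proof
    fix p assume pV: "p \<in> VV"
    have "(2^\<tau> * (opA ^^ \<tau>) ?e p) mod 3 = 0"
      using RR_N[of x \<tau>] R0[OF pV] pV by (simp add: ceq_def)
    hence "(3::int) dvd 2^\<tau> * (opA ^^ \<tau>) ?e p" by presburger
    hence "(3::int) dvd (opA ^^ \<tau>) ?e p" by (simp add: coprime_dvd_mult_right_iff)
    thus "(opA ^^ \<tau>) ?e p mod 3 = (\<lambda>_. 0) p mod 3" by simp
  qed
  obtain j where j1: "\<tau> \<le> 3^j" and j2: "nn dvd 3^j - 1" using exists_j[OF n3] by blast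
  have k: "(3::nat)^j = (3^j - \<tau>) + \<tau>" using j1 by simp
  have "(opA ^^ (3^j)) ?e = (opA ^^ ((3^j - \<tau>) + \<tau>)) ?e"
    by (rule arg_cong[where f = "\<lambda>n. (opA ^^ n) ?e"], rule k)
  also have "\<dots> = (opA ^^ (3^j - \<tau>)) ((opA ^^ \<tau>) ?e)"
    by (simp only: funpow_add o_apply)
  finally have "(opA ^^ (3^j)) ?e = (opA ^^ (3^j - \<tau>)) ((opA ^^ \<tau>) ?e)" .
  hence Z: "ceq ((opA ^^ (3^j)) ?e) (\<lambda>_. 0)"
    using funpow_ceq[OF N0, where k = "3^j - \<tau>"] op3_zero by simp
  have sh: "(u + 3^j * s) mod nn = (u + s) mod nn" for u s :: int
  proof -
    have "nn dvd (3^j - 1) * s" using j2 by simp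
    hence "nn dvd (u + 3^j * s) - (u + s)" by (simp add: algebra_simps)
    thus ?thesis by (simp only: mod_eq_dvd_iff)
  qed
  have P: "op3 (3^j*a) (3^j*(-a)) (3^j*l) ?e u = opA ?e u" for u
    unfolding op3_def sh by simp
  have Z2: "ceq (opA ?e) (\<lambda>_. 0)"
    using pow3[of j a "-a" l] Z P by (simp add: ceq_def)
  let ?u0 = "(x - a) mod nn"
  have xm: "x mod nn = x" using xV by (simp add: in_VV)
  have f1: "(?u0 + a) mod nn = x" using xm by (simp add: mod_add_left_eq)
  have "((x - a) mod nn - a) mod nn = (x - a - a) mod nn" by (simp add: mod_diff_left_eq)
  hence f2: "(?u0 + - a) mod nn \<noteq> x"
    using dist1[of "x - a"] xm by simp
  have f3: "(?u0 + l) mod nn \<noteq> x"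
    using dist2[of "x - a"] xm by (simp add: mod_add_left_eq)
  have "opA ?e ?u0 = 1" unfolding op3_def using f1 f2 f3 by simp
  moreover have "opA ?e ?u0 mod 3 = 0" using Z2 by (simp add: ceq_def)
  ultimately show False by simp
qed

lemma disconn:
  assumes d1: "d > 1" and da: "d dvd a" and dl: "d dvd l"
  shows "\<not> connected_graph VV EE"
proof
  assume c: "connected_graph VV EE"
  have V0: "0 \<in> VV" and V1: "1 \<in> VV" using l2 by (auto simp: in_VV)
  let ?R = "\<lambda>u v. u \<in> VV \<and> v \<in> VV \<and> EE u v"
  have "?R\<^sup>*\<^sup>* 0 1" using c V0 V1 by (simp add: connected_graph_def)
  moreover have "?R\<^sup>*\<^sup>* u v \<Longrightarrow> d dvd v - u" for u v
  proof (induction rule: rtranclp_induct)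
    case base
    then show ?case by simp
  next
    case (step y z)
    from step(2) have zV: "z \<in> VV" and yz: "EE y z" by auto
    have "z = (y + a) mod nn \<or> z = (y - a) mod nn \<or> z = (y + l) mod nn"
      using adj_iff[OF zV, of y] yz by simp
    then obtain s where s: "s \<in> {a, -a, l}" and zs: "z = (y + s) mod nn"
      by (metis diff_conv_add_uminus insertI1 insertI2)
    have ds: "d dvd s" using s da dl by auto
    have dn: "d dvd nn" using dl by simp
    have "nn dvd (y + s) mod nn - (y + s)"
      by (simp only: mod_eq_dvd_iff[symmetric] mod_mod_trivial)
    hence "d dvd (y + s) mod nn - (y + s)" using dn by (rule dvd_trans[rotated])
    hence "d dvd ((y + s) mod nn - (y + s)) + s" using ds by (rule dvd_add)
    moreover have "((y + s) mod nn - (y + s)) + s = z - y" unfolding zs by simp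
    ultimately have "d dvd z - y" by simp
    hence "d dvd (z - y) + (y - u)" using step(3) by (rule dvd_add)
    thus ?case by simp
  qed
  ultimately have "d dvd 1" by fastforce
  thus False using d1 zdvd_imp_le by fastforce
qed

end


lemma neg1_powi: "(-1::complex) powi k = (if even k then 1 else -1)"
proof -
  have w: "(-1::complex) powi 2 = 1" by simp
  have "(-1::complex) powi k = (-1) powi (k mod 2)" using powi_mod[OF w, of k] by simp
  moreover have "k mod 2 = (if even k then 0 else 1)" by presburger
  ultimately show ?thesis by (auto split: if_splits)
qed

lemma root_powi:
  fixes m k :: int
  assumes m: "m > 0"
  shows "cis (2 * pi / of_int m) powi k = 1 \<longleftrightarrow> m dvd k"
proof -
  have "cis (2 * pi / of_int m) powi k = cis (of_int k * (2 * pi / of_int m))" by (simp add: cis_power_int)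
  also have "\<dots> = 1 \<longleftrightarrow> (\<exists>n. of_int k * (2 * pi / of_int m) = of_int n * (2 * pi))" by (rule cis_eq_1_iff)
  also have "\<dots> \<longleftrightarrow> (\<exists>n. k = n * m)"
  proof
    assume "\<exists>n. of_int k * (2 * pi / of_int m) = of_int n * (2 * pi)"
    then obtain n where "of_int k * (2 * pi / of_int m) = of_int n * (2 * pi)" by blast
    hence "real_of_int k = of_int n * of_int m" using m pi_gt_zero by (simp add: field_simps)
    hence "k = n * m" by (simp flip: of_int_mult)
    thus "\<exists>n. k = n * m" by blast
  next
    assume "\<exists>n. k = n * m"
    then obtain n where "k = n * m" by blast
    hence "of_int k * (2 * pi / of_int m) = of_int n * (2 * pi)" using m by (simp add: field_simps)
    thus "\<exists>n. of_int k * (2 * pi / of_int m) = of_int n * (2 * pi)" by blast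
  qed
  also have "\<dots> \<longleftrightarrow> m dvd k" by (auto simp: dvd_def mult.commute)
  finally show ?thesis .
qed

lemma root_powi_eq:
  fixes m p q :: int
  assumes m: "m > 0" and e: "cis (2 * pi / of_int m) powi p = cis (2 * pi / of_int m) powi q"
  shows "m dvd p - q"
proof -
  let ?w = "cis (2 * pi / of_int m)"
  have w0: "?w \<noteq> 0" by (metis cis_neq_zero)
  have "?w powi (p - q) = ?w powi p / ?w powi q" using w0 by (simp add: power_int_diff)
  also have "\<dots> = 1" using e w0 by simp
  finally show ?thesis using root_powi[OF m] by simp
qed

context C3 begin

lemma case_ii:
  assumes xV: "x \<in> VV" and yV: "y \<in> VV" and par: "even a \<noteq> even l"
    and H: "\<forall>e\<in>arcs VV EE. (grover_apply VV EE ^^ Suc \<tau>) (vertex_state VV EE x) e = \<gamma> * vertex_state VV EE y e"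
  shows False
proof -
  have w: "(-1::complex) powi nn = 1" by (simp add: neg1_powi)
  define m :: int where "m = (if even a then 1 else -1)"
  have m1: "m = 1 \<or> m = -1" by (simp add: m_def)
  have c: "2/3 * ((-1::complex) powi (-a) + (-1) powi a + (-1) powi (-l)) = 2 * of_int m / 3"
    using par by (auto simp: neg1_powi m_def)
  have Ea: "(-1) powi (-a) * Phi (-1) (FF x (Suc \<tau>)) - Phi (-1) (FF x \<tau>) = \<gamma> * (-1) powi y"
    using char_eq[OF w xV yV H, of a] by simp
  have El: "(-1) powi (-l) * Phi (-1) (FF x (Suc \<tau>)) - Phi (-1) (FF x \<tau>) = \<gamma> * (-1) powi y"
    using char_eq[OF w xV yV H, of l] by simp
  have "((-1::complex) powi (-a) - (-1) powi (-l)) * Phi (-1) (FF x (Suc \<tau>)) = 0"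
    using Ea El by (simp add: algebra_simps)
  moreover have "(-1::complex) powi (-a) - (-1) powi (-l) \<noteq> 0" using par by (auto simp: neg1_powi)
  ultimately have z: "Phi (-1) (FF x (Suc \<tau>)) = 0" by simp
  have "Phi (-1) (FF x (Suc \<tau>)) = sq (2 * of_int m / 3) ((-1) powi x) (Suc \<tau>)"
    using Phi_sq[OF w xV, of "Suc \<tau>"] by (simp only: c)
  moreover have "((-1::complex) powi x) \<noteq> 0" by (simp add: neg1_powi)
  ultimately show False using sq_third_ne[OF m1] z by simp
qed

end


context C3 begin

lemma case_iii:
  assumes xV: "x \<in> VV" and yV: "y \<in> VV" and xy: "x \<noteq> y"
    and H: "\<forall>e\<in>arcs VV EE. (grover_apply VV EE ^^ Suc \<tau>) (vertex_state VV EE x) e = \<gamma> * vertex_state VV EE y e"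
    and l3: "3 dvd l" and oa: "odd a" and ol: "odd l" and a3: "\<not> 3 dvd a"
  shows False
proof -
  have sa: "a \<in> {a, -a, l}" and sma: "-a \<in> {a, -a, l}" and sl: "l \<in> {a, -a, l}" by simp_all
  have w1: "(1::complex) powi nn = 1" by simp
  have c1: "2/3 * ((1::complex) powi (-a) + 1 powi a + 1 powi (-l)) = 2" by simp
  have P1: "Phi 1 (FF x t) = of_nat t" for t
    using Phi_sq[OF w1 xV, of t] by (simp only: c1) (simp add: sq_2)
  have "1 powi (-l) * Phi 1 (FF x (Suc \<tau>)) - Phi 1 (FF x \<tau>) = \<gamma> * 1 powi y"
    by (rule char_eq[OF w1 xV yV H sl])
  hence "1 * of_nat (Suc \<tau>) - of_nat \<tau> = \<gamma> * (1::complex)" by (simp only: P1 power_int_1_left)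
  hence g1: "\<gamma> = 1" by simp
  have wm: "(-1::complex) powi nn = 1" by (simp add: neg1_powi)
  have cm: "2/3 * ((-1::complex) powi (-a) + (-1) powi a + (-1) powi (-l)) = -2"
    using oa ol by (simp add: neg1_powi)
  let ?z = "(-1::complex) powi x"
  have Pm: "Phi (-1) (FF x t) = ?z * (-1)^(t+1) * of_nat t" for t
    using Phi_sq[OF wm xV, of t] by (simp only: cm sq_m2)
  have "(-1) powi (-l) * Phi (-1) (FF x (Suc \<tau>)) - Phi (-1) (FF x \<tau>) = \<gamma> * (-1::complex) powi y"
    by (rule char_eq[OF wm xV yV H sl])
  hence "(-1) powi (-l) * (?z * (-1)^(Suc \<tau>+1) * of_nat (Suc \<tau>)) - ?z * (-1)^(\<tau>+1) * of_nat \<tau> = \<gamma> * (-1::complex) powi y"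
    by (simp only: Pm)
  moreover have "(-1::complex) powi (-l) = -1" using ol by (simp add: neg1_powi)
  ultimately have "- (?z * (-1)^(\<tau>+2) * of_nat (Suc \<tau>)) - ?z * (-1)^(\<tau>+1) * of_nat \<tau> = (-1::complex) powi y"
    using g1 by simp
  hence em: "?z * (-1)^(\<tau>+1) = (-1::complex) powi y"
    by (simp add: algebra_simps)
  define w3 where "w3 = cis (2 * pi / of_int 3)"
  have r3: "w3 powi k = 1 \<longleftrightarrow> 3 dvd k" for k unfolding w3_def using root_powi[of 3 k] by simp
  have w3n: "w3 powi nn = 1" using r3 l3 by simp
  have w30: "w3 \<noteq> 0" unfolding w3_def by (metis cis_neq_zero)
  have "w3 powi 3 = 1 \<longleftrightarrow> 3 dvd (3::int)" by (rule r3)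
  hence w3c: "w3^3 = 1" by simp
  have "w3 powi 1 = 1 \<longleftrightarrow> 3 dvd (1::int)" by (rule r3)
  hence w3ne: "w3 \<noteq> 1" by simp
  have "(w3 - 1) * (w3^2 + w3 + 1) = w3^3 - 1" by (simp add: algebra_simps power2_eq_square power3_eq_cube)
  hence wsum: "w3^2 + w3 + 1 = 0" using w3c w3ne by simp
  have w3pl: "w3 powi (-l) = 1" using r3 l3 by simp
  have m3: "w3 powi 3 = 1" using w3c by simp
  have pa: "w3 powi a = w3 powi (a mod 3)" and pma: "w3 powi (-a) = w3 powi ((-a) mod 3)"
    using powi_mod[OF m3, of a] powi_mod[OF m3, of "-a"] by simp_all
  have "(a mod 3 = 1 \<and> (-a) mod 3 = 2) \<or> (a mod 3 = 2 \<and> (-a) mod 3 = 1)" using a3 by presburger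
  hence s3: "w3 powi a + w3 powi (-a) = -1"
  proof
    assume "a mod 3 = 1 \<and> (-a) mod 3 = 2"
    thus ?thesis using pa pma wsum by (simp add: algebra_simps eq_neg_iff_add_eq_0)
  next
    assume "a mod 3 = 2 \<and> (-a) mod 3 = 1"
    thus ?thesis using pa pma wsum by (simp add: algebra_simps eq_neg_iff_add_eq_0)
  qed
  have c3: "2/3 * (w3 powi (-a) + w3 powi a + w3 powi (-l)) = 0"
    using s3 w3pl by (simp add: algebra_simps)
  have ne3: "w3 powi (-a) \<noteq> w3 powi a"
  proof
    assume "w3 powi (-a) = w3 powi a"
    hence "3 dvd (-a) - a" using root_powi_eq[of 3 "-a" a] unfolding w3_def by simp
    hence "3 dvd a" by presburger
    thus False using a3 by simp
  qed
  have "w3 powi (-a) * Phi w3 (FF x (Suc \<tau>)) - Phi w3 (FF x \<tau>) = w3 powi (-(-a)) * Phi w3 (FF x (Suc \<tau>)) - Phi w3 (FF x \<tau>)"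
    using char_eq[OF w3n xV yV H sa] char_eq[OF w3n xV yV H sma] by (simp only:)
  hence "(w3 powi (-a) - w3 powi a) * Phi w3 (FF x (Suc \<tau>)) = 0" by (simp only: minus_minus left_diff_distrib) simp
  hence "Phi w3 (FF x (Suc \<tau>)) = 0" using ne3 by simp
  hence "sq 0 (w3 powi x) (Suc \<tau>) = 0" using Phi_sq[OF w3n xV, of "Suc \<tau>"] by (simp only: c3)
  moreover have "w3 powi x \<noteq> 0" using w30 by simp
  ultimately have evt: "even (Suc \<tau>)" using sq_0_even by blast
  define wn where "wn = cis (2 * pi / of_int nn)"
  have wnn: "wn powi nn = 1" unfolding wn_def using root_powi[of nn nn] nn_pos by simp
  have wn0: "wn \<noteq> 0" unfolding wn_def by (metis cis_neq_zero)
  have nen: "wn powi (-a) \<noteq> wn powi a"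
  proof
    assume "wn powi (-a) = wn powi a"
    hence "nn dvd (-a) - a" using root_powi_eq[of nn "-a" a] nn_pos unfolding wn_def by simp
    hence "nn dvd 2 * a" by (metis dvd_minus_iff minus_diff_eq diff_minus_eq_add mult_2 add.inverse_inverse)
    thus False using ndvd[of "2*a"] a1 al by simp
  qed
  let ?c = "2/3 * (wn powi (-a) + wn powi a + wn powi (-l))"
  have "wn powi (-a) * Phi wn (FF x (Suc \<tau>)) - Phi wn (FF x \<tau>) = wn powi (-(-a)) * Phi wn (FF x (Suc \<tau>)) - Phi wn (FF x \<tau>)"
    using char_eq[OF wnn xV yV H sa] char_eq[OF wnn xV yV H sma] by (simp only:)
  hence "(wn powi (-a) - wn powi a) * Phi wn (FF x (Suc \<tau>)) = 0" by (simp only: minus_minus left_diff_distrib) simp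
  hence z1: "Phi wn (FF x (Suc \<tau>)) = 0" using nen by simp
  have "(sq ?c (wn powi x) (Suc \<tau>))^2 - ?c * sq ?c (wn powi x) (Suc \<tau>) * sq ?c (wn powi x) \<tau> + (sq ?c (wn powi x) \<tau>)^2 = (wn powi x)^2"
    by (rule sq_inv)
  hence sqP: "(Phi wn (FF x \<tau>))^2 = (wn powi x)^2"
    using z1 by (simp only: Phi_sq[OF wnn xV, of "Suc \<tau>", symmetric] Phi_sq[OF wnn xV, of \<tau>, symmetric]) simp
  have "wn powi (-l) * Phi wn (FF x (Suc \<tau>)) - Phi wn (FF x \<tau>) = \<gamma> * wn powi y"
    by (rule char_eq[OF wnn xV yV H sl])
  hence "- Phi wn (FF x \<tau>) = wn powi y" using z1 g1 by (simp only:) simp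
  hence "Phi wn (FF x \<tau>) = - (wn powi y)" by (metis minus_minus)
  hence "(wn powi y)^2 = (wn powi x)^2" using sqP by simp
  hence "wn powi (y * 2) = wn powi (x * 2)" by (simp add: power_int_mult)
  hence "cis (2 * pi / of_int nn) powi (y * 2) = cis (2 * pi / of_int nn) powi (x * 2)" unfolding wn_def .
  hence d1: "nn dvd y * 2 - x * 2" by (rule root_powi_eq[OF nn_pos])
  then obtain q where q: "y * 2 - x * 2 = nn * q" by (auto simp: dvd_def)
  hence "2 * (y - x) = 2 * (l * q)" by (simp add: algebra_simps)
  hence "y - x = l * q" by simp
  hence ldv: "l dvd y - x" by (simp add: dvd_def)
  have "(-1::complex)^(\<tau>+1) = 1" using evt by simp
  hence "(-1::complex) powi x = (-1) powi y" using em by simp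
  hence pxy: "even x = even y" by (auto simp: neg1_powi split: if_splits)
  obtain k where k: "y - x = l * k" using ldv by (auto simp: dvd_def)
  have bx: "0 \<le> x" "x < nn" and yb: "0 \<le> y" "y < nn" using xV yV by (simp_all add: in_VV)
  have lpos: "l > 0" using l2 by simp
  have "l * k < l * 2" using k bx yb by linarith
  hence k1: "k < 2" using lpos by simp
  have "l * (-2) < l * k" using k yb bx by linarith
  hence k2: "-2 < k" using lpos mult_less_cancel_left_pos[of l "-2" k] by simp
  have "k \<noteq> 0"
  proof
    assume "k = 0"
    hence "y - x = 0" using k by simp
    thus False using xy by simp
  qed
  hence "k = 1 \<or> k = -1" using k1 k2 by linarith
  hence "odd (y - x)" using k ol by auto
  thus False using pxy by simp
qed

end

theorem theorem1p2:
  fixes l a :: int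
  assumes "l \<ge> 2" and "1 \<le> a" and "a \<le> l - 1"
    and "connected_graph (circ_vertices (2*l)) (circ_adj (2*l) {a, -a, l})"
    and "regular_graph (circ_vertices (2*l)) (circ_adj (2*l) {a, -a, l}) 3"
  shows "\<not> (\<exists>x y (\<tau>::nat) (\<gamma>::complex).
            x \<in> circ_vertices (2*l) \<and> y \<in> circ_vertices (2*l) \<and> x \<noteq> y \<and> \<tau> \<ge> 1 \<and> cmod \<gamma> = 1 \<and>
            (\<forall>e \<in> arcs (circ_vertices (2*l)) (circ_adj (2*l) {a, -a, l}).
               (grover_apply (circ_vertices (2*l)) (circ_adj (2*l) {a, -a, l}) ^^ \<tau>)
                  (vertex_state (circ_vertices (2*l)) (circ_adj (2*l) {a, -a, l}) x) e
               = \<gamma> * vertex_state (circ_vertices (2*l)) (circ_adj (2*l) {a, -a, l}) y e))"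
proof
  assume "\<exists>x y (\<tau>::nat) (\<gamma>::complex).
            x \<in> circ_vertices (2*l) \<and> y \<in> circ_vertices (2*l) \<and> x \<noteq> y \<and> \<tau> \<ge> 1 \<and> cmod \<gamma> = 1 \<and>
            (\<forall>e \<in> arcs (circ_vertices (2*l)) (circ_adj (2*l) {a, -a, l}).
               (grover_apply (circ_vertices (2*l)) (circ_adj (2*l) {a, -a, l}) ^^ \<tau>)
                  (vertex_state (circ_vertices (2*l)) (circ_adj (2*l) {a, -a, l}) x) e
               = \<gamma> * vertex_state (circ_vertices (2*l)) (circ_adj (2*l) {a, -a, l}) y e)"
  then obtain x y \<tau> \<gamma> where xV: "x \<in> circ_vertices (2*l)" and yV: "y \<in> circ_vertices (2*l)"
    and xy: "x \<noteq> y" and t1: "(\<tau>::nat) \<ge> 1"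
    and H: "\<forall>e \<in> arcs (circ_vertices (2*l)) (circ_adj (2*l) {a, -a, l}).
               (grover_apply (circ_vertices (2*l)) (circ_adj (2*l) {a, -a, l}) ^^ \<tau>)
                  (vertex_state (circ_vertices (2*l)) (circ_adj (2*l) {a, -a, l}) x) e
               = (\<gamma>::complex) * vertex_state (circ_vertices (2*l)) (circ_adj (2*l) {a, -a, l}) y e"
    by blast
  interpret C3 l a using assms(1-3) by unfold_locales
  obtain \<tau>' where tt: "\<tau> = Suc \<tau>'" using t1 by (cases \<tau>) auto
  have H': "\<forall>e \<in> arcs VV EE. (grover_apply VV EE ^^ Suc \<tau>') (vertex_state VV EE x) e = \<gamma> * vertex_state VV EE y e"
    using H tt by simp
  show False
  proof (cases "3 dvd l")
    case False
    show ?thesis using case_i[OF xV yV False H'] .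
  next
    case l3: True
    show ?thesis
    proof (cases "even a = even l")
      case False
      thus ?thesis using case_ii[OF xV yV _ H'] by simp
    next
      case True
      have "\<not> (2 dvd a \<and> 2 dvd l)" using disconn[of 2] assms(4) by auto
      hence oa: "odd a" and ol: "odd l" using True by auto
      have a3: "\<not> 3 dvd a" using disconn[of 3] assms(4) l3 by auto
      show ?thesis using case_iii[OF xV yV xy H' l3 oa ol a3] .
    qed
  qed
qed

end
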